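(* Let $\phi=(\phi_i)_{i\ge1}$ and $\psi=(\psi_i)_{i\ge1}$ be sequences of real numbers with $\psi_i>-2$ for all $i\ge1$, and define $\mathcal{H}_0^{\phi,\psi}=1$ and, for $n\ge0$, $$\mathcal{H}_{n+1}^{\phi,\psi}(x)=2x\mathcal{H}_n^{\phi,\psi}(x)-(\mathcal{H}_n^{\phi,\psi})'(x)+(\phi_{n+1}+x\psi_{n+1})\mathcal{H}_n^{\phi,\psi}(x).$$ Assume that for some integer $n\ge2$ we have $\phi_{n-1}=\phi_n$ and $\psi_{n-1}=\psi_n$. Then $$\big(\mathcal{H}_{n-1}^{\phi,\psi}(x)\big)^2-\mathcal{H}_n^{\phi,\psi}(x)\mathcal{H}_{n-2}^{\phi,\psi}(x)>0\quad\text{for all }x\in\mathbb{R}.$$ *)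

theory Defs
  imports "HOL-Computational_Algebra.Polynomial"
begin

text \<open>Generalized Hermite-type polynomials: H_0 = 1 and
  H_(n+1) = 2x H_n - H_n' + (phi_(n+1) + x psi_(n+1)) H_n.
  The sequences phi, psi are indexed from 1 (value at index 0 is irrelevant).\<close>

fun genH :: "(nat \<Rightarrow> real) \<Rightarrow> (nat \<Rightarrow> real) \<Rightarrow> nat \<Rightarrow> real poly" where
  "genH phi psi 0 = 1"
| "genH phi psi (Suc n) =
     [:0, 2:] * genH phi psi n - pderiv (genH phi psi n)
     + [:phi (Suc n), psi (Suc n):] * genH phi psi n"

end

theory Submission
  imports Defs
begin

lemma at_right_pos:
  fixes p :: "real poly"
  assumes "lead_coeff p > 0"
  shows "\<exists>T. \<forall>x\<ge>T. poly p x > 0"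
  using poly_pinfty_gt_lc[OF assms] assms by (meson less_le_trans)

lemma at_left_sign:
  fixes p :: "real poly"
  assumes "lead_coeff p > 0"
  shows "\<exists>s. \<forall>x\<le>s. (-1)^degree p * poly p x > 0"
proof -
  define q where "q = smult ((-1)^degree p) (pcompose p [:0,-1:])"
  have "lead_coeff q = (-1)^degree p * (lead_coeff p * (-1)^degree p)"
    unfolding q_def lead_coeff_smult by (subst lead_coeff_comp) auto
  also have "\<dots> = lead_coeff p" by (simp flip: power_mult_distrib)
  finally have "lead_coeff q > 0" using assms by simp
  then obtain T where T: "\<forall>x\<ge>T. poly q x > 0" using at_right_pos by blast
  have "(-1)^degree p * poly p x > 0" if "x \<le> -T" for x
    using T[rule_format, of "-x"] that by (simp add: q_def poly_pcompose)
  then show ?thesis by blast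
qed

lemma count_roots:
  fixes A :: "real set"
  assumes "finite A"
  shows "\<forall>g. g \<noteq> 0 \<longrightarrow> (\<forall>a\<in>A. (-1)^card {b\<in>A. a<b} * poly g a > 0) \<longrightarrow>
           card A \<le> Suc (card {z. poly g z = 0 \<and> z < Max A})"
  using assms
proof (induction A rule: finite_ranking_induct[where f="\<lambda>x. x"])
  case empty
  then show ?case by simp
next
  case (insert x S)
  show ?case
  proof (intro allI impI)
    fix g :: "real poly"
    assume g0: "g \<noteq> 0" and cond: "\<forall>a\<in>insert x S. (-1)^card {b\<in>insert x S. a<b} * poly g a > 0"
    show "card (insert x S) \<le> Suc (card {z. poly g z = 0 \<and> z < Max (insert x S)})"
    proof (cases "x \<in> S \<or> S = {}")
      case True
      then show ?thesis
      proof
        assume "x \<in> S"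
        then show ?thesis using insert.IH g0 cond by (simp add: insert_absorb)
      qed simp
    next
      case False
      then have xS: "x \<notin> S" and Sne: "S \<noteq> {}" by auto
      define m where "m = Max S"
      have mS: "m \<in> S" using Sne insert.hyps(1) by (simp add: m_def)
      have mx: "m < x" using insert.hyps(2)[OF mS] xS mS by (metis order_le_imp_less_or_eq)
      have Mx: "Max (insert x S) = x"
        using insert.hyps Sne mx by (simp add: max_def m_def[symmetric])
      have cS: "\<forall>a\<in>S. (-1)^card {b\<in>S. a<b} * poly (-g) a > 0"
      proof
        fix a assume aS: "a \<in> S"
        have ax: "a < x" using insert.hyps(2)[OF aS] xS aS by (metis order_le_imp_less_or_eq)
        have "{b\<in>insert x S. a<b} = insert x {b\<in>S. a<b}" using ax by auto
        then have "card {b\<in>insert x S. a<b} = Suc (card {b\<in>S. a<b})"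
          using xS insert.hyps(1) by simp
        then show "(-1)^card {b\<in>S. a<b} * poly (-g) a > 0"
          using cond aS by auto
      qed
      have IH: "card S \<le> Suc (card {z. poly g z = 0 \<and> z < m})"
        using insert.IH[rule_format, of "-g"] g0 cS by (simp add: m_def)
      have "{b\<in>insert x S. x<b} = {}" using insert.hyps(2) by force
      then have "card {b\<in>insert x S. x<b} = 0" by (simp only: card.empty)
      then have gx: "poly g x > 0" using cond[rule_format, of x] by simp
      have "{b\<in>insert x S. m<b} = {x}" using mx insert.hyps(1) Max_ge[OF insert.hyps(1)] by (auto simp: m_def not_less[symmetric])
      then have "card {b\<in>insert x S. m<b} = 1" by (simp only: is_singleton_altdef[symmetric] is_singletonI)
      then have gm: "poly g m < 0" using cond[rule_format, of m] mS
        by (simp add: mult_less_0_iff)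
      obtain z0 where z0: "m < z0" "z0 < x" "poly g z0 = 0"
        using poly_IVT_pos[OF mx gm gx] by blast
      have fin: "finite {z. poly g z = 0 \<and> z < x}"
        using poly_roots_finite[OF g0] by simp
      have sub: "insert z0 {z. poly g z = 0 \<and> z < m} \<subseteq> {z. poly g z = 0 \<and> z < x}"
        using z0 mx by auto
      have "card (insert z0 {z. poly g z = 0 \<and> z < m}) = Suc (card {z. poly g z = 0 \<and> z < m})"
        using z0 poly_roots_finite[OF g0] by (subst card_insert_disjoint) auto
      with card_mono[OF fin sub] IH xS insert.hyps(1)
      show ?thesis by (simp add: Mx)
    qed
  qed
qed

lemma prod_dvd:
  fixes p :: "real poly"
  assumes "finite S"
  shows "(\<forall>x\<in>S. poly p x = 0) \<Longrightarrow> (\<Prod>x\<in>S. [:-x,1:]) dvd p"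
  using assms
proof (induction S arbitrary: p rule: finite_induct)
  case empty then show ?case by simp
next
  case (insert x S)
  then obtain q where q: "p = [:-x,1:] * q" using poly_eq_0_iff_dvd by blast
  have "\<forall>y\<in>S. poly q y = 0" using insert q by auto
  then have "(\<Prod>x\<in>S. [:-x,1:]) dvd q" using insert.IH by blast
  then have "[:-x,1:] * (\<Prod>x\<in>S. [:-x,1:]) dvd [:-x,1:] * q" by (rule mult_dvd_mono[OF dvd_refl])
  then show ?case using insert q by (simp del: mult_pCons_left)
qed

lemma prod_form:
  fixes p :: "real poly"
  assumes p0: "p \<noteq> 0" and cd: "card {x. poly p x = 0} = degree p"
  shows "p = smult (lead_coeff p) (\<Prod>x\<in>{x. poly p x = 0}. [:-x,1:])"
proof -
  define S where "S = {x. poly p x = 0}"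
  have fin: "finite S" using poly_roots_finite[OF p0] by (simp add: S_def)
  define P where "P = (\<Prod>x\<in>S. [:-x::real,1:])"
  have "P dvd p" using prod_dvd[OF fin] by (simp add: P_def S_def)
  then obtain k where k: "p = P * k" by blast
  have P0: "P \<noteq> 0" using fin by (simp add: P_def)
  have k0: "k \<noteq> 0" using k p0 by auto
  have dP: "degree P = card S" using fin
    by (simp add: P_def degree_prod_eq_sum_degree)
  have "degree p = degree P + degree k" using k P0 k0 by (simp add: degree_mult_eq)
  then have "degree k = 0" using cd dP by (simp add: S_def)
  then obtain c where c: "k = [:c:]" by (meson degree_eq_zeroE)
  have lP: "lead_coeff P = 1" by (simp add: P_def lead_coeff_prod)
  have "p = smult c P" using k c by simp
  moreover then have "lead_coeff p = c" using lP by (simp add: lead_coeff_smult)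
  ultimately show ?thesis by (simp add: P_def S_def)
qed


lemma laguerre_prod:
  fixes S :: "real set"
  assumes "finite S"
  shows "0 \<le> poly (pderiv (\<Prod>r\<in>S. [:-r,1:])) x ^ 2
        - poly (\<Prod>r\<in>S. [:-r,1:]) x * poly (pderiv (pderiv (\<Prod>r\<in>S. [:-r,1:]))) x"
  using assms
proof (induction S rule: finite_induct)
  case empty then show ?case by simp
next
  case (insert r S)
  define h where "h = (\<Prod>r\<in>S. [:-r::real,1:])"
  have e: "(\<Prod>r\<in>insert r S. [:-r,1:]) = [:-r,1:] * h" using insert by (simp add: h_def)
  define a where "a = poly h x"
  define b where "b = poly (pderiv h) x"
  define c where "c = poly (pderiv (pderiv h)) x"
  have IH: "0 \<le> b^2 - a*c" using insert.IH by (simp add: a_def b_def c_def h_def)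
  have d1: "pderiv ([:-r,1:] * h) = h + [:-r,1:] * pderiv h"
    by (simp del: mult_pCons_left add: pderiv_mult pderiv_pCons)
  have d2: "pderiv (pderiv ([:-r,1:] * h)) = 2 * pderiv h + [:-r,1:] * pderiv (pderiv h)"
    unfolding d1 by (simp del: mult_pCons_left add: pderiv_mult pderiv_add pderiv_pCons)
  have "poly (pderiv ([:-r,1:] * h)) x ^ 2 - poly ([:-r,1:] * h) x * poly (pderiv (pderiv ([:-r,1:] * h))) x
     = a^2 + (x-r)^2 * (b^2 - a*c)"
    unfolding d2 unfolding d1 by (simp add: a_def b_def c_def algebra_simps power2_eq_square)
  also have "\<dots> \<ge> 0" using IH by simp
  finally show ?case unfolding e .
qed

lemma laguerre:
  fixes S :: "real set"
  assumes "finite S"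
  shows "0 \<le> poly (pderiv (smult l (\<Prod>r\<in>S. [:-r,1:]))) x ^ 2
        - poly (smult l (\<Prod>r\<in>S. [:-r,1:])) x * poly (pderiv (pderiv (smult l (\<Prod>r\<in>S. [:-r,1:])))) x"
proof -
  have "poly (pderiv (smult l (\<Prod>r\<in>S. [:-r,1:]))) x ^ 2
        - poly (smult l (\<Prod>r\<in>S. [:-r,1:])) x * poly (pderiv (pderiv (smult l (\<Prod>r\<in>S. [:-r,1:])))) x
     = l^2 * (poly (pderiv (\<Prod>r\<in>S. [:-r,1:])) x ^ 2
        - poly (\<Prod>r\<in>S. [:-r,1:]) x * poly (pderiv (pderiv (\<Prod>r\<in>S. [:-r,1:]))) x)"
    by (simp add: pderiv_smult algebra_simps power2_eq_square)
  then show ?thesis using laguerre_prod[OF assms, of x] by simp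
qed

lemma deriv_at_root:
  fixes S :: "real set"
  assumes "finite S" "r \<in> S"
  shows "poly (pderiv (\<Prod>x\<in>S. [:-x,1:])) r = (\<Prod>s\<in>S-{r}. r - s)"
proof -
  have "(\<Prod>x\<in>S. [:-x,1:]) = [:-r,1:] * (\<Prod>x\<in>S-{r}. [:-x,1:])"
    using assms by (simp add: prod.remove del: mult_pCons_left)
  then show ?thesis by (simp add: pderiv_mult pderiv_pCons poly_prod del: mult_pCons_left)
qed

lemma sign_helper:
  fixes P P1 Q k P2 :: real
  assumes "P = P1 * Q" "Q = k * P2" "P1 > 0" "P2 > 0" "k * k = 1"
  shows "k * P > 0"
proof -
  have "k * P = P1 * P2 * (k * k)" using assms(1,2) by (simp add: algebra_simps)
  then show ?thesis using assms(3-5) by simp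
qed

lemma sign_prod:
  fixes S :: "real set"
  assumes "finite S" "r \<in> S"
  shows "(-1)^card {s\<in>S. r<s} * (\<Prod>s\<in>S-{r}. r - s) > 0"
proof -
  have split: "S - {r} = {s\<in>S. s<r} \<union> {s\<in>S. r<s}" by auto
  have "(\<Prod>s\<in>S-{r}. r - s) = (\<Prod>s\<in>{s\<in>S. s<r}. r - s) * (\<Prod>s\<in>{s\<in>S. r<s}. r - s)"
    unfolding split using assms by (subst prod.union_disjoint) auto
  moreover have "(\<Prod>s\<in>{s\<in>S. r<s}. r - s) = (-1)^card {s\<in>S. r<s} * (\<Prod>s\<in>{s\<in>S. r<s}. s - r)"
  proof -
    have "(\<Prod>s\<in>{s\<in>S. r<s}. r - s) = (\<Prod>s\<in>{s\<in>S. r<s}. (-1) * (s - r))" by (rule prod.cong) auto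
    also have "\<dots> = (\<Prod>s\<in>{s\<in>S. r<s}. -1) * (\<Prod>s\<in>{s\<in>S. r<s}. s - r)" by (rule prod.distrib)
    finally show ?thesis by simp
  qed
  moreover have "(\<Prod>s\<in>{s\<in>S. s<r}. r - s) > 0" by (rule prod_pos) auto
  moreover have "(\<Prod>s\<in>{s\<in>S. r<s}. s - r) > 0" by (rule prod_pos) auto
  moreover have "(-1::real)^card {s\<in>S. r<s} * (-1)^card {s\<in>S. r<s} = 1"
    by (simp flip: power_mult_distrib)
  ultimately show ?thesis by (rule sign_helper)
qed


definition Inv :: "real poly \<Rightarrow> bool" where
  "Inv f \<longleftrightarrow> f \<noteq> 0 \<and> lead_coeff f > 0 \<and> card {x. poly f x = 0} = degree f"

lemma step:
  fixes f :: "real poly"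
  assumes inv: "Inv f" and c: "c > 0"
  shows "Inv ([:a,c:] * f - pderiv f)"
proof -
  define g where "g = [:a,c:] * f - pderiv f"
  define d where "d = degree f"
  define l where "l = lead_coeff f"
  define S where "S = {x. poly f x = 0}"
  have f0: "f \<noteq> 0" and l0: "l > 0" and cS: "card S = d"
    using inv by (auto simp: Inv_def l_def S_def d_def)
  have finS: "finite S" using poly_roots_finite[OF f0] by (simp add: S_def)
  have coef: "coeff g (Suc d) = c * l"
    by (simp add: g_def coeff_pderiv l_def d_def coeff_eq_0)
  have "degree ([:a,c:] * f) \<le> Suc d"
    using degree_mult_le[of "[:a,c:]" f] c by (simp add: d_def del: mult_pCons_left)
  moreover have "degree (pderiv f) \<le> Suc d" by (simp add: degree_pderiv d_def)
  ultimately have "degree g \<le> Suc d" unfolding g_def by (rule degree_diff_le)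
  moreover have "Suc d \<le> degree g" using coef c l0 by (intro le_degree) simp
  ultimately have dg: "degree g = Suc d" by simp
  have lg: "lead_coeff g = c * l" using dg coef by simp
  have lgp: "lead_coeff g > 0" using lg c l0 by simp
  have g0: "g \<noteq> 0" using lgp by auto
  have fform: "f = smult l (\<Prod>x\<in>S. [:-x,1:])"
    using prod_form[OF f0] inv by (simp add: Inv_def S_def l_def)
  have groot: "poly g r = - (l * (\<Prod>s\<in>S-{r}. r - s))" if "r \<in> S" for r
  proof -
    have "poly f r = 0" using that by (simp add: S_def)
    moreover have "poly (pderiv f) r = l * (\<Prod>s\<in>S-{r}. r - s)"
      by (subst fform) (simp add: pderiv_smult deriv_at_root[OF finS that])
    ultimately show ?thesis by (simp add: g_def)
  qed
  obtain T where T: "\<forall>x\<ge>T. poly g x > 0" using at_right_pos[OF lgp] by blast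
  obtain s where s: "\<forall>x\<le>s. (-1)^Suc d * poly g x > 0" using at_left_sign[OF lgp] dg by auto
  define B where "B = Max (insert 0 (abs ` S))"
  have B: "\<bar>r\<bar> \<le> B" if "r \<in> S" for r
    unfolding B_def using finS that by (intro Max_ge) auto
  define T' where "T' = max T (B + 1)"
  define s' where "s' = min s (- B - 1)"
  have T'S: "r < T'" if "r \<in> S" for r using B[OF that] by (simp add: T'_def)
  have s'S: "s' < r" if "r \<in> S" for r using B[OF that] by (simp add: s'_def)
  have B0: "0 \<le> B" unfolding B_def using finS by (intro Max_ge) auto
  have sT: "s' < T'" using B0 by (simp add: s'_def T'_def)
  define A where "A = insert s' (insert T' S)"
  have finA: "finite A" using finS by (simp add: A_def)
  have T'nS: "T' \<notin> S" using T'S by auto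
  have s'nS: "s' \<notin> S" using s'S by auto
  have cA: "card A = Suc (Suc d)"
    using finS T'nS s'nS sT cS by (simp add: A_def)
  have cond: "\<forall>x\<in>A. (-1)^card {b\<in>A. x<b} * poly g x > 0"
  proof
    fix x assume xA: "x \<in> A"
    show "(-1)^card {b\<in>A. x<b} * poly g x > 0"
    proof (cases "x = T'")
      case True
      have "{b\<in>A. x<b} = {}" using True sT T'S by (auto simp: A_def dest: T'S)
      then have "card {b\<in>A. x<b} = 0" by (simp only: card.empty)
      moreover have "T \<le> T'" by (simp add: T'_def)
      ultimately show ?thesis using T True by simp
    next
      case nT: False
      show ?thesis
      proof (cases "x = s'")
        case True
        have "{b\<in>A. x<b} = insert T' S" using True sT s'S by (auto simp: A_def)
        then have "card {b\<in>A. x<b} = Suc d" using finS T'nS cS by simp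
        moreover have "s' \<le> s" by (simp add: s'_def)
        ultimately show ?thesis using s True by simp
      next
        case False
        then have xS: "x \<in> S" using xA nT by (auto simp: A_def)
        have "{b\<in>A. x<b} = insert T' {b\<in>S. x<b}" using xS T'S s'S by (auto simp: A_def dest: s'S[of x] T'S[of x])
        then have "card {b\<in>A. x<b} = Suc (card {b\<in>S. x<b})" using finS T'nS by simp
        then show ?thesis using groot[OF xS] sign_prod[OF finS xS] l0
          by (simp add: mult.left_commute)
      qed
    qed
  qed
  have "card A \<le> Suc (card {z. poly g z = 0 \<and> z < Max A})"
    using count_roots[OF finA] g0 cond by blast
  also have "card {z. poly g z = 0 \<and> z < Max A} \<le> card {z. poly g z = 0}"
    using poly_roots_finite[OF g0] by (intro card_mono) auto
  finally have "Suc d \<le> card {z. poly g z = 0}" using cA by simp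
  moreover have "card {z. poly g z = 0} \<le> degree g" by (rule card_poly_roots_bound[OF g0])
  ultimately have "card {z. poly g z = 0} = degree g" using dg by simp
  then show ?thesis using g0 lgp by (simp add: Inv_def g_def)
qed


lemma genH_Suc': "genH phi psi (Suc m) = [:phi (Suc m), 2 + psi (Suc m):] * genH phi psi m - pderiv (genH phi psi m)"
proof -
  have "[:0, 2:] * genH phi psi m + [:phi (Suc m), psi (Suc m):] * genH phi psi m
      = ([:0, 2:] + [:phi (Suc m), psi (Suc m):]) * genH phi psi m" by (simp only: distrib_right)
  then show ?thesis by (simp del: mult_pCons_left add: algebra_simps)
qed

lemma genH_Inv:
  assumes "\<forall>i\<ge>1. psi i > -2"
  shows "Inv (genH phi psi m)"
proof (induction m)
  case 0
  then show ?case by (simp add: Inv_def)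
next
  case (Suc m)
  have "2 + psi (Suc m) > 0" using assms[rule_format, of "Suc m"] by simp
  then show ?case unfolding genH_Suc' by (rule step[OF Suc])
qed

theorem theorem3p4:
  fixes phi psi :: "nat \<Rightarrow> real" and n :: nat
  assumes "\<forall>i\<ge>1. psi i > -2"
    and "n \<ge> 2"
    and "phi (n - 1) = phi n" and "psi (n - 1) = psi n"
  shows "\<forall>x::real. (poly (genH phi psi (n - 1)) x)^2
                    - poly (genH phi psi n) x * poly (genH phi psi (n - 2)) x > 0"
proof
  fix x :: real
  obtain m where n: "n = Suc (Suc m)" using assms(2) by (metis add_2_eq_Suc le_add_diff_inverse)
  define P where "P = genH phi psi m"
  define a where "a = phi n"
  define c where "c = 2 + psi n"
  have c0: "c > 0" using assms(1)[rule_format, of n] n by (simp add: c_def)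
  have Q: "genH phi psi (n - 1) = [:a,c:] * P - pderiv P"
    using assms(3,4) n by (simp only: genH_Suc' P_def a_def c_def) (simp add: smult_add_left)
  have nm1: "n - 1 = Suc m" using n by simp
  have R: "genH phi psi n = [:a,c:] * genH phi psi (n-1) - pderiv (genH phi psi (n-1))"
    unfolding nm1 unfolding a_def c_def n by (rule genH_Suc')
  have P2: "genH phi psi (n - 2) = P" using n by (simp add: P_def)
  define p0 where "p0 = poly P x"
  define p1 where "p1 = poly (pderiv P) x"
  define p2 where "p2 = poly (pderiv (pderiv P)) x"
  have dQ: "pderiv ([:a,c:] * P - pderiv P) = [:a,c:] * pderiv P + smult c P - pderiv (pderiv P)"
    by (simp add: pderiv_add pderiv_smult pderiv_diff pderiv_pCons algebra_simps)
  have key: "(poly (genH phi psi (n - 1)) x)^2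
                    - poly (genH phi psi n) x * poly (genH phi psi (n - 2)) x
        = p1^2 - p0 * p2 + c * p0^2"
    unfolding R P2 unfolding Q dQ
    by (simp add: p0_def p1_def p2_def algebra_simps power2_eq_square)
  have inv: "Inv P" using genH_Inv[OF assms(1)] by (simp add: P_def)
  then have P0: "P \<noteq> 0" and cd: "card {x. poly P x = 0} = degree P" by (auto simp: Inv_def)
  define S where "S = {x. poly P x = 0}"
  have finS: "finite S" using poly_roots_finite[OF P0] by (simp add: S_def)
  have form: "P = smult (lead_coeff P) (\<Prod>x\<in>S. [:-x,1:])"
    using prod_form[OF P0 cd] by (simp add: S_def)
  have lag: "0 \<le> p1^2 - p0 * p2"
    unfolding p0_def p1_def p2_def by (subst (1 2 3) form) (rule laguerre[OF finS])
  show "(poly (genH phi psi (n - 1)) x)^2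
                    - poly (genH phi psi n) x * poly (genH phi psi (n - 2)) x > 0"
  proof (cases "p0 = 0")
    case False
    then have "c * p0^2 > 0" using c0 by simp
    then show ?thesis using key lag by linarith
  next
    case True
    then have xS: "x \<in> S" by (simp add: S_def p0_def)
    have "p1 = lead_coeff P * (\<Prod>s\<in>S-{x}. x - s)"
      unfolding p1_def by (subst form) (simp add: pderiv_smult deriv_at_root[OF finS xS])
    moreover have "lead_coeff P \<noteq> 0" using P0 by simp
    moreover have "(\<Prod>s\<in>S-{x}. x - s) \<noteq> 0" using sign_prod[OF finS xS] by auto
    ultimately have "p1 \<noteq> 0" by simp
    then have "p1^2 > 0" by simp
    then show ?thesis using key True by simp
  qed
qed

end
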